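(* Let $\mathbf x\in\mathbb R^p_+$ and let $x_i,x_j$ be two of its components with $x_i>x_j$. Let $\varepsilon\in(0,(x_i-x_j)/2)$ and let $\mathbf z\in\mathbb R^p_+$ be defined by $z_i=x_i-\varepsilon$, $z_j=x_j+\varepsilon$, and $z_k=x_k$ for $k\ne i,j$. Let $\mathbf w$ satisfy $w_1\ge w_2\ge\cdots\ge w_p\ge0$, and let $\Delta=\min\{w_l-w_{l+1}: l=1,\dots,p-1\}$. Then $$\Omega_{\mathbf w}(\mathbf x)-\Omega_{\mathbf w}(\mathbf z)\ge\Delta\,\varepsilon.$$
   Context: $\Omega_{\mathbf w}(\mathbf x)=\sum_{i=1}^p w_i|x|_{[i]}$, where $|x|_{[i]}$ denotes the $i$-th largest component of $\mathbf x$ in magnitude. *)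

theory Defs
  imports Complex_Main
begin

text \<open>Vectors in R^p are functions nat => real, components indexed 1..p.
  sorted_abs p x lists |x_1|,...,|x_p| in non-increasing order, so
  |x|_[i] = sorted_abs p x ! (i-1).\<close>

definition sorted_abs :: "nat \<Rightarrow> (nat \<Rightarrow> real) \<Rightarrow> real list" where
  "sorted_abs p x = rev (sort (map (\<lambda>k. \<bar>x k\<bar>) [1..<p+1]))"

definition owl :: "nat \<Rightarrow> (nat \<Rightarrow> real) \<Rightarrow> (nat \<Rightarrow> real) \<Rightarrow> real" where
  "owl p w x = (\<Sum>i=1..p. w i * (sorted_abs p x ! (i - 1)))"

end

theory Submission imports Defs "HOL-Library.Multiset" begin

lemma sum_sort: "sum_list (map (f::real\<Rightarrow>real) (rev (sort xs))) = sum_list (map f (xs::real list))"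
proof -
  have "mset (map f (rev (sort xs))) = mset (map f xs)" by simp
  then have "sum_mset (mset (map f (rev (sort xs)))) = sum_mset (mset (map f xs))" by simp
  then show ?thesis by (simp only: sum_mset_sum_list)
qed

lemma sorted_desc:
  assumes "a < b" "b < length (rev (sort (xs::real list)))"
  shows "rev (sort xs) ! b \<le> rev (sort xs) ! a"
proof -
  have "sorted_wrt (\<ge>) (rev (sort xs))" by (simp add: sorted_wrt_rev)
  then show ?thesis using assms by (simp add: sorted_wrt_iff_nth_less)
qed

lemma abel:
  "(\<Sum>i=1..n. w i * (s::nat\<Rightarrow>real) (i-1)) =
   (\<Sum>l\<in>{1..<n}. (w l - w (l+1)) * (\<Sum>m<l. s m)) + w n * (\<Sum>m<n. s m)"
proof (induction n)
  case 0 then show ?case by simp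
next
  case (Suc n)
  show ?case
  proof (cases "n = 0")
    case True then show ?thesis by simp
  next
    case False
    have "{1..<Suc n} = insert n {1..<n}" using False by auto
    then have "(\<Sum>l\<in>{1..<Suc n}. (w l - w (l+1)) * (\<Sum>m<l. s m)) =
       (w n - w (n+1)) * (\<Sum>m<n. s m) + (\<Sum>l\<in>{1..<n}. (w l - w (l+1)) * (\<Sum>m<l. s m))"
      by simp
    then show ?thesis using Suc by (simp add: algebra_simps)
  qed
qed

definition phi :: "real \<Rightarrow> real \<Rightarrow> real" where "phi t y = max (y - t) 0"

lemma upper:
  assumes "l \<le> length s"
  shows "(\<Sum>m<l. s ! m) \<le> l * t + (\<Sum>m<length s. phi t (s ! m))"
proof -
  have "(\<Sum>m<l. s ! m) \<le> (\<Sum>m<l. t + phi t (s ! m))"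
    by (rule sum_mono) (simp add: phi_def)
  also have "\<dots> = l * t + (\<Sum>m<l. phi t (s ! m))" by (simp add: sum.distrib)
  also have "(\<Sum>m<l. phi t (s ! m)) \<le> (\<Sum>m<length s. phi t (s ! m))"
    by (rule sum_mono2) (use assms in \<open>auto simp: phi_def\<close>)
  finally show ?thesis by simp
qed

lemma equal:
  assumes "l \<le> length s" "\<forall>m<l. s ! m \<ge> t" "\<forall>m. l \<le> m \<and> m < length s \<longrightarrow> s ! m \<le> t"
  shows "(\<Sum>m<l. s ! m) = l * t + (\<Sum>m<length s. phi t (s ! m))"
proof -
  have split: "{..<length s} = {..<l} \<union> {l..<length s}" using assms(1) by auto
  have "(\<Sum>m<length s. phi t (s ! m)) = (\<Sum>m<l. phi t (s ! m)) + (\<Sum>m\<in>{l..<length s}. phi t (s ! m))"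
    unfolding split by (rule sum.union_disjoint) auto
  also have "(\<Sum>m\<in>{l..<length s}. phi t (s ! m)) = 0"
    using assms(3) by (intro sum.neutral) (auto simp: phi_def)
  also have "(\<Sum>m<l. phi t (s ! m)) = (\<Sum>m<l. s ! m - t)"
    using assms(2) by (intro sum.cong) (auto simp: phi_def)
  finally show ?thesis by (simp add: sum_subtractf)
qed

lemma sum_phi_list:
  "(\<Sum>m<length (rev (sort xs)). phi t (rev (sort xs) ! m)) = sum_list (map (phi t) (xs::real list))"
proof -
  have "(\<Sum>m<length (rev (sort xs)). phi t (rev (sort xs) ! m)) = sum_list (map (phi t) (rev (sort xs)))"
    by (simp add: sum_list_sum_nth lessThan_atLeast0)
  then show ?thesis by (simp add: sum_sort)
qed

lemma sum_phi_fun: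
  "sum_list (map (phi t) (map f [1..<p+1])) = (\<Sum>k\<in>{1..p}. phi t (f k))"
proof -
  have "sum_list (map (phi t) (map f [1..<p+1])) = sum_list (map (\<lambda>k. phi t (f k)) [1..<p+1])"
    by (simp only: map_map comp_def)
  also have "\<dots> = (\<Sum>k\<in>set [1..<p+1]. phi t (f k))"
    by (rule sum_list_distinct_conv_sum_set) simp
  also have "set [1..<p+1] = {1..p}" by auto
  finally show ?thesis .
qed

lemma phi_pair:
  assumes "b + e < a - e" "0 < e"
  shows "phi t (a - e) + phi t (b + e) \<le> phi t a + phi t b"
  using assms unfolding phi_def by (auto simp: max_def)

lemma phi_pair_eq:
  assumes "b + e < a - e" "0 < e"
  shows "phi (b + e) (a - e) + phi (b + e) (b + e) = phi (b + e) a + phi (b + e) b - e"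
  using assms unfolding phi_def by (auto simp: max_def)

theorem lemma1:
  fixes p i j :: nat and x z w :: "nat \<Rightarrow> real" and \<epsilon> :: real
  assumes x_nonneg: "\<forall>k\<in>{1..p}. x k \<ge> 0"
    and i: "i \<in> {1..p}" and j: "j \<in> {1..p}"
    and xij: "x i > x j"
    and eps_pos: "0 < \<epsilon>" and eps_lt: "\<epsilon> < (x i - x j) / 2"
    and z_def: "z = (\<lambda>k. if k = i then x i - \<epsilon> else if k = j then x j + \<epsilon> else x k)"
    and w_mono: "\<forall>l\<in>{1..<p}. w l \<ge> w (l + 1)"
    and w_nonneg: "w p \<ge> 0"
  shows "owl p w x - owl p w z \<ge> Min ((\<lambda>l. w l - w (l + 1)) ` {1..<p}) * \<epsilon>"
proof -
  have ij: "i \<noteq> j" using xij by auto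
  have gap: "x j + \<epsilon> < x i - \<epsilon>" using eps_lt by simp
  have z_nonneg: "\<forall>k\<in>{1..p}. z k \<ge> 0"
  proof
    fix k assume k: "k \<in> {1..p}"
    have "x j \<ge> 0" using x_nonneg j by auto
    then show "z k \<ge> 0" using x_nonneg k gap eps_pos by (auto simp: z_def)
  qed
  define xs where "xs = map x [1..<p+1]"
  define zs where "zs = map z [1..<p+1]"
  define sx where "sx = rev (sort xs)"
  define sz where "sz = rev (sort zs)"
  have lx: "length sx = p" and lz: "length sz = p" by (simp_all add: sx_def sz_def xs_def zs_def)
  have sax: "sorted_abs p x = sx"
    unfolding sorted_abs_def sx_def xs_def
    by (rule arg_cong[where f="\<lambda>l. rev (sort l)"], rule map_cong) (use x_nonneg in auto)
  have saz: "sorted_abs p z = sz"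
    unfolding sorted_abs_def sz_def zs_def
    by (rule arg_cong[where f="\<lambda>l. rev (sort l)"], rule map_cong) (use z_nonneg in auto)
  define Tx where "Tx l = (\<Sum>m<l. sx ! m)" for l
  define Tz where "Tz l = (\<Sum>m<l. sz ! m)" for l
  define g where "g l = w l - w (l + 1)" for l
  have ox: "owl p w x = (\<Sum>l\<in>{1..<p}. g l * Tx l) + w p * Tx p"
    unfolding owl_def sax Tx_def g_def by (rule abel)
  have oz: "owl p w z = (\<Sum>l\<in>{1..<p}. g l * Tz l) + w p * Tz p"
    unfolding owl_def saz Tz_def g_def by (rule abel)
  have diff: "owl p w x - owl p w z = (\<Sum>l\<in>{1..<p}. g l * (Tx l - Tz l)) + w p * (Tx p - Tz p)"
    unfolding ox oz by (simp add: algebra_simps sum_subtractf)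
  have PX: "sum_list (map (phi t) xs) = (\<Sum>k\<in>{1..p}. phi t (x k))" for t
    unfolding xs_def by (rule sum_phi_fun)
  have PZ: "sum_list (map (phi t) zs) = (\<Sum>k\<in>{1..p}. phi t (z k))" for t
    unfolding zs_def by (rule sum_phi_fun)
  have splitsum: "(\<Sum>k\<in>{1..p}. f k) = f i + f j + (\<Sum>k\<in>{1..p} - {i} - {j}. f k)" for f :: "nat \<Rightarrow> real"
  proof -
    have "(\<Sum>k\<in>{1..p}. f k) = f i + (\<Sum>k\<in>{1..p} - {i}. f k)"
      using i by (simp add: sum.remove)
    also have "(\<Sum>k\<in>{1..p} - {i}. f k) = f j + (\<Sum>k\<in>{1..p} - {i} - {j}. f k)"
      using j ij by (intro sum.remove) auto
    finally show ?thesis by simp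
  qed
  have rest: "(\<Sum>k\<in>{1..p} - {i} - {j}. phi t (z k)) = (\<Sum>k\<in>{1..p} - {i} - {j}. phi t (x k))" for t
    by (rule sum.cong) (auto simp: z_def)
  have zi: "z i = x i - \<epsilon>" and zj: "z j = x j + \<epsilon>" using ij by (simp_all add: z_def)
  have Ple: "(\<Sum>k\<in>{1..p}. phi t (z k)) \<le> (\<Sum>k\<in>{1..p}. phi t (x k))" for t
    unfolding splitsum[of "\<lambda>k. phi t (z k)"] splitsum[of "\<lambda>k. phi t (x k)"] rest zi zj
    using phi_pair[OF gap eps_pos, of t] by linarith
  define t0 where "t0 = x j + \<epsilon>"
  have Peq: "(\<Sum>k\<in>{1..p}. phi t0 (z k)) = (\<Sum>k\<in>{1..p}. phi t0 (x k)) - \<epsilon>"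
    unfolding splitsum[of "\<lambda>k. phi t0 (z k)"] splitsum[of "\<lambda>k. phi t0 (x k)"] rest zi zj
    using phi_pair_eq[OF gap eps_pos] unfolding t0_def by linarith
  have SX: "(\<Sum>m<p. phi t (sx ! m)) = (\<Sum>k\<in>{1..p}. phi t (x k))" for t
    using sum_phi_list[of t xs] unfolding PX sx_def[symmetric] lx .
  have SZ: "(\<Sum>m<p. phi t (sz ! m)) = (\<Sum>k\<in>{1..p}. phi t (z k))" for t
    using sum_phi_list[of t zs] unfolding PZ sz_def[symmetric] lz .
  have desc: "a < b \<Longrightarrow> b < p \<Longrightarrow> sx ! b \<le> sx ! a" for a b
    using sorted_desc[of a b xs] unfolding sx_def[symmetric] lx by simp
  have Dnn: "Tz l \<le> Tx l" if l: "1 \<le> l" "l \<le> p" for l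
  proof -
    define t where "t = sx ! (l - 1)"
    have c1: "\<forall>m<l. sx ! m \<ge> t"
    proof (intro allI impI)
      fix m assume "m < l"
      then show "sx ! m \<ge> t" unfolding t_def using desc[of m "l - 1"] l
        by (cases "m = l - 1") auto
    qed
    have c2: "\<forall>m. l \<le> m \<and> m < p \<longrightarrow> sx ! m \<le> t"
      unfolding t_def using desc l by auto
    have "Tx l = l * t + (\<Sum>m<p. phi t (sx ! m))"
      unfolding Tx_def using equal[of l sx t] l c1 c2 lx by simp
    moreover have "Tz l \<le> l * t + (\<Sum>m<p. phi t (sz ! m))"
      unfolding Tz_def using upper[of l sz t] l lz by simp
    ultimately show ?thesis using Ple[of t] SX[of t] SZ[of t] by linarith
  qed
  define L where "L = length (takeWhile (\<lambda>y. y > t0) sx)"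
  have xj_in: "x j \<in> set sx"
    unfolding sx_def xs_def set_rev set_sort set_map by (rule imageI) (use j in auto)
  have xi_in: "x i \<in> set sx"
    unfolding sx_def xs_def set_rev set_sort set_map by (rule imageI) (use i in auto)
  have Lbig: "\<forall>m<L. sx ! m > t0"
  proof (intro allI impI)
    fix m assume m: "m < L"
    have "takeWhile (\<lambda>y. y > t0) sx ! m \<in> set (takeWhile (\<lambda>y. y > t0) sx)"
      using m unfolding L_def by (rule nth_mem)
    then have "takeWhile (\<lambda>y. y > t0) sx ! m > t0" by (rule set_takeWhileD[THEN conjunct2])
    then show "sx ! m > t0" using m unfolding L_def by (simp add: takeWhile_nth)
  qed
  have Lp: "L < p"
  proof (rule ccontr)
    assume "\<not> L < p"
    obtain k where k: "k < p" "sx ! k = x j" using xj_in lx by (metis in_set_conv_nth)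
    have "k < L" using k(1) \<open>\<not> L < p\<close> by simp
    then have "sx ! k > t0" using Lbig by blast
    then show False using k eps_pos unfolding t0_def by simp
  qed
  have sL: "sx ! L \<le> t0"
    using nth_length_takeWhile[of "\<lambda>y. y > t0" sx] Lp lx unfolding L_def by simp
  have Lsmall: "\<forall>m. L \<le> m \<and> m < p \<longrightarrow> sx ! m \<le> t0"
    using sL desc by (metis le_less order_trans)
  have L1: "1 \<le> L"
  proof (rule ccontr)
    assume "\<not> 1 \<le> L"
    then have L0: "L = 0" by simp
    obtain k where k: "k < p" "sx ! k = x i" using xi_in lx by (metis in_set_conv_nth)
    have "sx ! k \<le> sx ! 0" using desc[of 0 k] k by (cases k) auto
    then show False using sL L0 k gap eps_pos unfolding t0_def by simp
  qed
  have DL: "Tx L - Tz L \<ge> \<epsilon>"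
  proof -
    have "Tx L = L * t0 + (\<Sum>m<p. phi t0 (sx ! m))"
    proof -
      have "\<forall>m<L. sx ! m \<ge> t0" using Lbig by (simp add: less_imp_le)
      then show ?thesis unfolding Tx_def using equal[of L sx t0] Lp Lsmall lx by simp
    qed
    moreover have "Tz L \<le> L * t0 + (\<Sum>m<p. phi t0 (sz ! m))"
      unfolding Tz_def using upper[of L sz t0] Lp lz by simp
    ultimately show ?thesis using Peq SX[of t0] SZ[of t0] by linarith
  qed
  have Lin: "L \<in> {1..<p}" using L1 Lp by auto
  have gnn: "l \<in> {1..<p} \<Longrightarrow> g l \<ge> 0" for l using w_mono by (auto simp: g_def)
  have "(\<Sum>l\<in>{1..<p}. g l * (Tx l - Tz l)) = g L * (Tx L - Tz L) + (\<Sum>l\<in>{1..<p} - {L}. g l * (Tx l - Tz l))"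
    using Lin by (simp add: sum.remove)
  moreover have "(\<Sum>l\<in>{1..<p} - {L}. g l * (Tx l - Tz l)) \<ge> 0"
    by (rule sum_nonneg) (use gnn Dnn in \<open>auto intro!: mult_nonneg_nonneg\<close>)
  moreover have "w p * (Tx p - Tz p) \<ge> 0"
    using w_nonneg Dnn[of p] Lp by auto
  moreover have "g L * (Tx L - Tz L) \<ge> g L * \<epsilon>"
    using DL gnn[OF Lin] by (simp add: mult_left_mono)
  moreover have "Min ((\<lambda>l. w l - w (l + 1)) ` {1..<p}) \<le> g L"
    unfolding g_def using Lin by (intro Min_le) auto
  then have "Min ((\<lambda>l. w l - w (l + 1)) ` {1..<p}) * \<epsilon> \<le> g L * \<epsilon>"
    using eps_pos by (simp add: mult_right_mono)
  ultimately show ?thesis unfolding diff by linarith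
qed

end
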